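(* Let $G$ be an $N$-player normal-form game in which each player has $T$ actions, and let $f$ be a deterministic, permutation-equivariant embedding function with $f(G)=(\mathbf{A}_1,\dots,\mathbf{A}_N)$, $\mathbf{A}_p=({\bm{a}}^1_p,\dots,{\bm{a}}^T_p)$. If for some player $p$ and actions $a^i_p,a^j_p$ we have $G_r(a^i_p,a_{\neg p}) = G_r(a^j_p,a_{\neg p})$ for every player $r$ and every $a_{\neg p}\in\mathcal{A}_{\neg p}$, then ${\bm{a}}^i_p={\bm{a}}^j_p$.
   Context: A normal-form game $G$ with $N$ players, each player $p$ having actions $\mathcal{A}_p=\{a^1_p,\dots,a^T_p\}$, is given by payoff functions $G_p:\mathcal{A}=\mathcal{A}_1\times\dots\times\mathcal{A}_N\to\mathbb{R}$; $a_{\neg p}\in\mathcal{A}_{\neg p}$ denotes the actions of all players other than $p$. A strong isomorphism $\phi=((\tau_p)_{p\in[N]},\omega)$ consists of a permutation $\omega$ of the players and, for each player $p$, a bijection $\tau_p$ from the actions of $p$ to the actions of $\omega(p)$; it maps $G$ to the game $\phi(G)$ with $\phi(G)_{\omega(p)}(b)=G_p(a)$ for all $p$ and joint actions $a$, where $b_{\omega(r)}=\tau_r(a_r)$ for every player $r$. An embedding function $f$ assigns to each game a tuple $(\mathbf{A}_1,\dots,\mathbf{A}_N)$ of action embeddings ${\bm{a}}^t_p\in\mathbb{R}^D$, one per action; $\phi$ acts on such a tuple by placing the embedding of action $a^i_p$ at the position of action $\tau_p(a^i_p)$ of player $\omega(p)$. $f$ is (permutation-)equivariant if $f(\phi(G))=\phi(f(G))$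 for every game $G$ and strong isomorphism $\phi$; deterministic means $f$ is a single-valued function of the game. *)

theory Defs
  imports "HOL-Analysis.Analysis"
begin

text \<open>Players are the elements of a finite type 'p (N = CARD('p)); every player has the
same set of T actions, the elements of a finite type 'a (T = CARD('a)).\<close>

type_synonym ('p, 'a) game = "'p \<Rightarrow> ('p \<Rightarrow> 'a) \<Rightarrow> real"
type_synonym ('p, 'a, 'd) embeddings = "'p \<Rightarrow> 'a \<Rightarrow> real ^ 'd"

definition strong_iso :: "('p \<Rightarrow> 'p) \<Rightarrow> ('p \<Rightarrow> 'a \<Rightarrow> 'a) \<Rightarrow> bool" where
  "strong_iso \<omega> \<tau> \<longleftrightarrow> bij \<omega> \<and> (\<forall>p. bij (\<tau> p))"

text \<open>phi(G)_{\<omega> p}(b) = G_p(a) where b_{\<omega> r} = \<tau>_r(a_r); i.e.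
phi(G)_q(b) = G_{\<omega>^-1 q}(\<lambda>r. \<tau>_r^-1(b_{\<omega> r})).\<close>
definition iso_game :: "('p \<Rightarrow> 'p) \<Rightarrow> ('p \<Rightarrow> 'a \<Rightarrow> 'a) \<Rightarrow> ('p, 'a) game \<Rightarrow> ('p, 'a) game" where
  "iso_game \<omega> \<tau> G = (\<lambda>q b. G (inv \<omega> q) (\<lambda>r. inv (\<tau> r) (b (\<omega> r))))"

text \<open>The embedding of action x of player p is placed at position \<tau> p x of player \<omega> p.\<close>
definition iso_emb :: "('p \<Rightarrow> 'p) \<Rightarrow> ('p \<Rightarrow> 'a \<Rightarrow> 'a) \<Rightarrow> ('p, 'a, 'd) embeddings \<Rightarrow> ('p, 'a, 'd) embeddings" where
  "iso_emb \<omega> \<tau> E = (\<lambda>q y. E (inv \<omega> q) (inv (\<tau> (inv \<omega> q)) y))"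

definition equivariant :: "(('p::finite, 'a::finite) game \<Rightarrow> ('p, 'a, 'd::finite) embeddings) \<Rightarrow> bool" where
  "equivariant f \<longleftrightarrow> (\<forall>G \<omega> \<tau>. strong_iso \<omega> \<tau> \<longrightarrow> f (iso_game \<omega> \<tau> G) = iso_emb \<omega> \<tau> (f G))"

end

theory Submission
  imports Defs
begin

definition sw :: "'a \<Rightarrow> 'a \<Rightarrow> 'a \<Rightarrow> 'a" where
  "sw i j = (\<lambda>x. if x = i then j else if x = j then i else x)"

lemma sw_invol: "sw i j (sw i j x) = x"
  by (auto simp: sw_def)

lemma sw_bij: "bij (sw i j)"
  by (metis bijI' sw_invol)

lemma sw_inv: "inv (sw i j) = sw i j"
  by (metis inv_unique_comp o_def id_def sw_invol ext)

theorem proposition1: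
  fixes f :: "('p::finite, 'a::finite) game \<Rightarrow> ('p, 'a, 'd::finite) embeddings"
    and G :: "('p, 'a) game" and p :: 'p and i j :: 'a
  assumes "equivariant f"
    and "\<forall>r. \<forall>a :: 'p \<Rightarrow> 'a. G r (a(p := i)) = G r (a(p := j))"
  shows "f G p i = f G p j"
proof -
  define \<tau> where "\<tau> = (\<lambda>r. if r = p then sw i j else (id :: 'a \<Rightarrow> 'a))"
  have si: "strong_iso id \<tau>"
    unfolding strong_iso_def \<tau>_def by (auto simp: sw_bij)
  have invt: "inv (\<tau> r) = \<tau> r" for r
    unfolding \<tau>_def by (auto simp: sw_inv)
  have gi: "iso_game id \<tau> G = G"
  proof (intro ext)
    fix q b
    have e: "(\<lambda>r. inv (\<tau> r) (b r)) = b(p := sw i j (b p))"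
      by (rule ext, simp add: invt, simp add: \<tau>_def)
    have "G q (b(p := sw i j (b p))) = G q b"
    proof -
      consider "b p = i" | "b p = j" "b p \<noteq> i" | "b p \<noteq> i" "b p \<noteq> j" by blast
      then show ?thesis
      proof cases
        case 1 then show ?thesis using assms(2)
          by (metis fun_upd_triv sw_def)
      next
        case 2 then show ?thesis using assms(2)
          by (metis fun_upd_triv sw_def)
      next
        case 3 then show ?thesis by (simp add: sw_def)
      qed
    qed
    then show "iso_game id \<tau> G q b = G q b"
      by (simp add: iso_game_def inv_id e)
  qed
  have "f G = iso_emb id \<tau> (f G)"
    using assms(1) si gi unfolding equivariant_def by metis
  then have "f G p i = iso_emb id \<tau> (f G) p i" by simp
  also have "\<dots> = f G p j"
    by (simp add: iso_emb_def inv_id sw_inv \<tau>_def, simp add: sw_def)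
  finally show ?thesis .
qed

end
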